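(* Under the hypotheses and notation of the context, assume moreover that $v$ is meromorphic in the unit disk. Then for every $n\ge2$ with $\phi_n(0)\ne0$ and $\phi_{n-1}(0)\ne0$, $$B_n(z)+B_{n-1}(z)-\frac{\kappa_{n-1}}{\kappa_{n-2}}\frac{A_{n-1}(z)}{z}-\frac{\kappa_n}{\kappa_{n-2}}\frac{\phi_{n-1}(0)}{\phi_n(0)}A_{n-1}(z)=-\frac{n-1}{z}-v'(z).$$
   Context: Let $w$ be a positive weight function on the unit circle normalized by $\int_{|\zeta|=1}w(\zeta)\frac{d\zeta}{i\zeta}=1$ (contour integrals counterclockwise), with orthonormal polynomials $\phi_n(z)=\kappa_nz^n+\cdots$, $\kappa_n>0$, $\int_{|\zeta|=1}\phi_m\overline{\phi_n}w\frac{d\zeta}{i\zeta}=\delta_{m,n}$. For $f(z)=\sum_{k=0}^na_kz^k$ of degree $n$, $f^*(z)=\sum_{k=0}^n\overline{a_k}z^{n-k}$. Let $v=-\log w$ and assume $w$ is differentiable in a neighborhood of the unit circle, has moments of all integral orders, and that $\int_{|\zeta|=1}\frac{v'(z)-v'(\zeta)}{z-\zeta}\zeta^mw(\zeta)\frac{d\zeta}{i\zeta}$ exists for all integers $m$. For $k\ge1$ with $\phi_k(0)\ne0$ define $$A_k(z)=k\frac{\kappa_{k-1}}{\kappa_k}+i\frac{\kappa_{k-1}}{\phi_k(0)}z\int_{|\zeta|=1}\frac{v'(z)-v'(\zeta)}{z-\zeta}\phi_k(\zeta)\overline{\phi_k^*(\zeta)}w(\zeta)\,d\zeta,$$ $$B_k(z)=-i\int_{|\zeta|=1}\frac{v'(z)-v'(\zeta)}{z-\zeta}\phi_k(\zeta)\Big[\overline{\phi_k(\zeta)}-\frac{\kappa_k}{\phi_k(0)}\overline{\phi_k^*(\zeta)}\Big]w(\zeta)\,d\zeta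 ,$$ and set $A_0=B_0=0$. *)

theory Defs
  imports "HOL-Complex_Analysis.Complex_Analysis" "HOL-Computational_Algebra.Polynomial"
begin

definition opuc_star :: "complex poly \<Rightarrow> complex \<Rightarrow> complex" where
  "opuc_star p z = (\<Sum>k\<le>degree p. cnj (coeff p k) * z ^ (degree p - k))"

abbreviation kap :: "(nat \<Rightarrow> complex poly) \<Rightarrow> nat \<Rightarrow> complex" where
  "kap \<phi> k \<equiv> lead_coeff (\<phi> k)"

text \<open>A_k(z); dv stands for v'. The integral is over the counterclockwise unit circle.\<close>
definition A_fun :: "(complex \<Rightarrow> complex) \<Rightarrow> (complex \<Rightarrow> complex) \<Rightarrow> (nat \<Rightarrow> complex poly)
    \<Rightarrow> nat \<Rightarrow> complex \<Rightarrow> complex" where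
  "A_fun w dv \<phi> k z =
    (if k = 0 then 0 else
      of_nat k * kap \<phi> (k - 1) / kap \<phi> k
      + \<i> * kap \<phi> (k - 1) / poly (\<phi> k) 0 * z *
        contour_integral (circlepath 0 1)
          (\<lambda>\<zeta>. (dv z - dv \<zeta>) / (z - \<zeta>) * poly (\<phi> k) \<zeta> * cnj (opuc_star (\<phi> k) \<zeta>) * w \<zeta>))"

definition B_fun :: "(complex \<Rightarrow> complex) \<Rightarrow> (complex \<Rightarrow> complex) \<Rightarrow> (nat \<Rightarrow> complex poly)
    \<Rightarrow> nat \<Rightarrow> complex \<Rightarrow> complex" where
  "B_fun w dv \<phi> k z =
    (if k = 0 then 0 else
      - \<i> * contour_integral (circlepath 0 1)
          (\<lambda>\<zeta>. (dv z - dv \<zeta>) / (z - \<zeta>) * poly (\<phi> k) \<zeta> *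
               (cnj (poly (\<phi> k) \<zeta>) - kap \<phi> k / poly (\<phi> k) 0 * cnj (opuc_star (\<phi> k) \<zeta>)) * w \<zeta>))"

end

theory Submission
  imports Defs
begin

lemma sphere_cnj: "\<zeta> \<in> sphere 0 1 \<Longrightarrow> \<zeta> * cnj \<zeta> = 1"
  by (metis complex_norm_square dist_0_norm mem_sphere mult.commute of_real_1 one_power2)

lemma sphere_nz: "\<zeta> \<in> sphere 0 1 \<Longrightarrow> \<zeta> \<noteq> 0" by auto

lemma sphere_cnj_pow: "\<zeta> \<in> sphere 0 1 \<Longrightarrow> \<zeta>^m * cnj \<zeta>^m = 1"
  by (metis power_mult_distrib power_one sphere_cnj)

definition rev :: "nat \<Rightarrow> complex poly \<Rightarrow> complex poly" where
  "rev m p = (\<Sum>k\<le>m. monom (cnj (coeff p k)) (m - k))"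

lemma poly_rev: "poly (rev m p) x = (\<Sum>k\<le>m. cnj (coeff p k) * x ^ (m - k))"
  by (simp add: rev_def poly_sum poly_monom)

lemma opuc_star_rev: "opuc_star p = poly (rev (degree p) p)"
  by (rule ext) (simp add: opuc_star_def poly_rev)

lemma degree_rev: "degree (rev m p) \<le> m"
  unfolding rev_def by (rule degree_sum_le) (auto intro: order.trans[OF degree_monom_le])

lemma coeff_rev: "j \<le> m \<Longrightarrow> coeff (rev m p) j = cnj (coeff p (m - j))"
proof -
  assume j: "j \<le> m"
  have "coeff (rev m p) j = (\<Sum>k\<le>m. if m - k = j then cnj (coeff p k) else 0)"
    by (simp add: rev_def coeff_sum coeff_monom)
  also have "\<dots> = (\<Sum>k\<in>{m-j}. cnj (coeff p k))"
    by (rule sum.mono_neutral_cong_right) (use j in auto)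
  finally show ?thesis by simp
qed

lemma poly_rev_circ:
  assumes z: "\<zeta> \<in> sphere 0 1" and d: "degree p \<le> m"
  shows "poly (rev m p) \<zeta> = \<zeta>^m * cnj (poly p \<zeta>)"
proof -
  have "cnj (poly p \<zeta>) = (\<Sum>k\<le>m. cnj (coeff p k) * cnj \<zeta> ^ k)"
  proof -
    have "cnj (poly p \<zeta>) = (\<Sum>k\<le>degree p. cnj (coeff p k) * cnj \<zeta> ^ k)"
      by (simp add: poly_altdef[of p])
    also have "\<dots> = (\<Sum>k\<le>m. cnj (coeff p k) * cnj \<zeta> ^ k)"
      by (rule sum.mono_neutral_left) (use d in \<open>auto simp: coeff_eq_0\<close>)
    finally show ?thesis .
  qed
  hence "\<zeta>^m * cnj (poly p \<zeta>) = (\<Sum>k\<le>m. cnj (coeff p k) * (\<zeta>^m * cnj \<zeta> ^ k))"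
    by (simp add: sum_distrib_left algebra_simps)
  also have "\<dots> = (\<Sum>k\<le>m. cnj (coeff p k) * \<zeta> ^ (m - k))"
  proof (rule sum.cong[OF refl])
    fix k assume "k \<in> {..m}"
    hence "\<zeta>^m = \<zeta>^(m-k) * \<zeta>^k" by (simp add: power_add[symmetric])
    hence "\<zeta>^m * cnj \<zeta> ^ k = \<zeta>^(m-k) * (\<zeta>^k * cnj \<zeta> ^ k)" by simp
    thus "cnj (coeff p k) * (\<zeta>^m * cnj \<zeta> ^ k) = cnj (coeff p k) * \<zeta> ^ (m - k)"
      using sphere_cnj_pow[OF z, of k] by simp
  qed
  finally show ?thesis by (simp add: poly_rev)
qed

lemma cnj_poly_rev_circ:
  assumes z: "\<zeta> \<in> sphere 0 1" and d: "degree p \<le> m"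
  shows "cnj (poly (rev m p) \<zeta>) = cnj \<zeta>^m * poly p \<zeta>"
  using poly_rev_circ[OF z d] by simp

locale opuc =
  fixes w :: "complex \<Rightarrow> complex" and \<phi> :: "nat \<Rightarrow> complex poly"
  assumes wcont: "continuous_on (sphere 0 1) w"
    and wreal: "\<And>\<zeta>. \<zeta> \<in> sphere 0 1 \<Longrightarrow> w \<zeta> \<in> \<real>"
    and deg: "\<And>k. degree (\<phi> k) = k"
    and lead: "\<And>k. lead_coeff (\<phi> k) \<in> \<real> \<and> Re (lead_coeff (\<phi> k)) > 0"
    and orth: "\<And>j k. contour_integral (circlepath 0 1)
        (\<lambda>\<zeta>. poly (\<phi> j) \<zeta> * cnj (poly (\<phi> k) \<zeta>) * w \<zeta> / (\<i> * \<zeta>)) = (if j = k then 1 else 0)"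
begin

definition M :: "(complex \<Rightarrow> complex) \<Rightarrow> complex" where
  "M h = contour_integral (circlepath 0 1) (\<lambda>\<zeta>. h \<zeta> * w \<zeta> / (\<i> * \<zeta>))"

definition ipp :: "complex poly \<Rightarrow> complex poly \<Rightarrow> complex" where
  "ipp p q = M (\<lambda>\<zeta>. poly p \<zeta> * cnj (poly q \<zeta>))"

abbreviation "\<kappa> k \<equiv> coeff (\<phi> k) k"

lemma kappa_lead: "lead_coeff (\<phi> k) = \<kappa> k" by (simp add: deg)

lemma kappa_real: "cnj (\<kappa> k) = \<kappa> k"
  using lead[of k] by (simp add: deg Reals_cnj_iff)

lemma kappa_nz: "\<kappa> k \<noteq> 0"
  using lead[of k] by (auto simp: deg)

lemma ipp_orth: "ipp (\<phi> j) (\<phi> k) = (if j = k then 1 else 0)"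
  using orth[of j k] by (simp add: ipp_def M_def)

lemma M_integrable:
  assumes "continuous_on (sphere 0 1) f"
  shows "(\<lambda>\<zeta>. f \<zeta> * w \<zeta> / (\<i> * \<zeta>)) contour_integrable_on circlepath 0 1"
  by (rule contour_integrable_continuous_circlepath)
     (auto intro!: continuous_intros assms wcont)

lemma M_cong: "(\<And>\<zeta>. \<zeta> \<in> sphere 0 1 \<Longrightarrow> f \<zeta> = g \<zeta>) \<Longrightarrow> M f = M g"
  unfolding M_def by (rule contour_integral_eq) auto

lemma M_add:
  assumes "continuous_on (sphere 0 1) f" "continuous_on (sphere 0 1) g"
  shows "M (\<lambda>\<zeta>. f \<zeta> + g \<zeta>) = M f + M g"
  unfolding M_def
  by (subst contour_integral_add[symmetric]) (auto simp: M_integrable assms add_divide_distrib distrib_right)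

lemma M_diff:
  assumes "continuous_on (sphere 0 1) f" "continuous_on (sphere 0 1) g"
  shows "M (\<lambda>\<zeta>. f \<zeta> - g \<zeta>) = M f - M g"
  unfolding M_def
  by (subst contour_integral_diff[symmetric]) (auto simp: M_integrable assms diff_divide_distrib left_diff_distrib)

lemma M_cmult:
  assumes "continuous_on (sphere 0 1) f"
  shows "M (\<lambda>\<zeta>. c * f \<zeta>) = c * M f"
  unfolding M_def
  by (subst contour_integral_lmul[symmetric]) (auto simp: M_integrable assms mult.assoc)

lemma M_cnj: "M (\<lambda>\<zeta>. cnj (f \<zeta>)) = cnj (M f)"
proof -
  have "M h = integral {0..1} (\<lambda>t. 2 * pi * (h (circlepath 0 1 t) * w (circlepath 0 1 t)))" for h
    unfolding M_def contour_integral_integral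
  proof (rule integral_cong)
    fix t assume "t \<in> {0..1::real}"
    have e: "circlepath 0 1 t = exp (2 * of_real pi * \<i> * of_real t)"
      by (simp add: circlepath)
    show "h (circlepath 0 1 t) * w (circlepath 0 1 t) / (\<i> * circlepath 0 1 t) *
          vector_derivative (circlepath 0 1) (at t) =
          complex_of_real (2 * pi) * (h (circlepath 0 1 t) * w (circlepath 0 1 t))"
      by (simp add: vector_derivative_circlepath e field_simps)
  qed
  moreover have "w (circlepath 0 1 t) \<in> \<real>" for t
    by (rule wreal) (simp add: circlepath norm_exp_eq_Re)
  ultimately show ?thesis
    by (simp add: integral_cnj Reals_cnj_iff)
qed

lemma cont_pp[continuous_intros]: "continuous_on (sphere 0 1) (\<lambda>\<zeta>. poly p \<zeta> * cnj (poly q \<zeta>))"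
  by (intro continuous_intros)

lemma ipp_add_left: "ipp (p + q) r = ipp p r + ipp q r"
  unfolding ipp_def by (subst M_add[symmetric]) (auto intro!: continuous_intros M_cong simp: algebra_simps)

lemma ipp_diff_left: "ipp (p - q) r = ipp p r - ipp q r"
  unfolding ipp_def by (subst M_diff[symmetric]) (auto intro!: continuous_intros M_cong simp: algebra_simps)

lemma ipp_smult_left: "ipp (smult c p) r = c * ipp p r"
  unfolding ipp_def by (subst M_cmult[symmetric]) (auto intro!: continuous_intros M_cong simp: algebra_simps)

lemma ipp_add_right: "ipp r (p + q) = ipp r p + ipp r q"
  unfolding ipp_def by (subst M_add[symmetric]) (auto intro!: continuous_intros M_cong simp: algebra_simps)

lemma ipp_diff_right: "ipp r (p - q) = ipp r p - ipp r q"
  unfolding ipp_def by (subst M_diff[symmetric]) (auto intro!: continuous_intros M_cong simp: algebra_simps)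

lemma ipp_smult_right: "ipp r (smult c p) = cnj c * ipp r p"
  unfolding ipp_def by (subst M_cmult[symmetric]) (auto intro!: continuous_intros M_cong simp: algebra_simps)

lemma ipp_swap: "ipp q p = cnj (ipp p q)"
  unfolding ipp_def by (subst M_cnj[symmetric]) (auto intro!: M_cong simp: algebra_simps)

lemma deg_drop: "degree q \<le> Suc k \<Longrightarrow> coeff q (Suc k) = 0 \<Longrightarrow> degree q \<le> k"
proof (rule ccontr)
  assume a: "degree q \<le> Suc k" "coeff q (Suc k) = 0" "\<not> degree q \<le> k"
  then have "degree q = Suc k" by simp
  with a(2) have "lead_coeff q = 0" by simp
  then have "q = 0" by simp
  with \<open>degree q = Suc k\<close> show False by simp
qed

lemma DEC: "degree p \<le> Suc k \<Longrightarrow> degree (p - smult (coeff p (Suc k) / \<kappa> (Suc k)) (\<phi> (Suc k))) \<le> k"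
proof (rule deg_drop)
  assume d: "degree p \<le> Suc k"
  have "degree (smult (coeff p (Suc k) / \<kappa> (Suc k)) (\<phi> (Suc k))) \<le> Suc k"
    by (rule order.trans[OF degree_smult_le]) (simp add: deg)
  then show "degree (p - smult (coeff p (Suc k) / \<kappa> (Suc k)) (\<phi> (Suc k))) \<le> Suc k"
    using d by (intro order.trans[OF degree_diff_le_max]) simp
  show "coeff (p - smult (coeff p (Suc k) / \<kappa> (Suc k)) (\<phi> (Suc k))) (Suc k) = 0"
    using kappa_nz[of "Suc k"] by simp
qed

lemma DEC0: "degree p = 0 \<Longrightarrow> p = smult (coeff p 0 / \<kappa> 0) (\<phi> 0)"
proof -
  assume d: "degree p = 0"
  have d0: "degree (\<phi> 0) = 0" by (rule deg)
  show ?thesis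
  proof (rule poly_eqI)
    fix n show "coeff p n = coeff (smult (coeff p 0 / \<kappa> 0) (\<phi> 0)) n"
    proof (cases n)
      case 0 then show ?thesis using kappa_nz[of 0] by simp
    next
      case (Suc m)
      then show ?thesis using coeff_eq_0[of p n] coeff_eq_0[of "\<phi> 0" n] d d0 by simp
    qed
  qed
qed

lemma ORTH: "degree p \<le> k \<Longrightarrow> k < m \<Longrightarrow> ipp p (\<phi> m) = 0 \<and> ipp (\<phi> m) p = 0"
proof (induction k arbitrary: p)
  case 0
  then have p: "p = smult (coeff p 0 / \<kappa> 0) (\<phi> 0)" by (intro DEC0) simp
  have "m \<noteq> 0" using 0 by simp
  then show ?case by (subst (1 2) p) (simp add: ipp_smult_left ipp_smult_right ipp_orth)
next
  case (Suc k)
  define r where "r = p - smult (coeff p (Suc k) / \<kappa> (Suc k)) (\<phi> (Suc k))"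
  have r: "degree r \<le> k" unfolding r_def using Suc by (intro DEC)
  have p: "p = r + smult (coeff p (Suc k) / \<kappa> (Suc k)) (\<phi> (Suc k))" by (simp add: r_def)
  show ?case using Suc.IH[OF r] Suc.prems
    by (subst (1 2) p) (simp add: ipp_add_left ipp_add_right ipp_smult_left ipp_smult_right ipp_orth)
qed

lemma ORTH1: "degree p < m \<Longrightarrow> ipp p (\<phi> m) = 0" using ORTH[of p "degree p" m] by simp
lemma ORTH2: "degree p < m \<Longrightarrow> ipp (\<phi> m) p = 0" using ORTH[of p "degree p" m] by simp

lemma DECm: "degree p \<le> m \<Longrightarrow> \<exists>r. p = r + smult (coeff p m / \<kappa> m) (\<phi> m) \<and> (r = 0 \<or> degree r < m)"
proof (cases m)
  case 0
  assume "degree p \<le> m"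
  then show ?thesis using DEC0[of p] 0 by (intro exI[of _ 0]) simp
next
  case (Suc k)
  assume d: "degree p \<le> m"
  show ?thesis
    by (rule exI[of _ "p - smult (coeff p m / \<kappa> m) (\<phi> m)"]) (use DEC[of p k] d Suc in auto)
qed

lemma LEAD:
  assumes "degree p \<le> m"
  shows "ipp p (\<phi> m) = coeff p m / \<kappa> m" "ipp (\<phi> m) p = cnj (coeff p m) / \<kappa> m"
proof -
  obtain r where p: "p = r + smult (coeff p m / \<kappa> m) (\<phi> m)" and r: "r = 0 \<or> degree r < m"
    using DECm[OF assms] by blast
  have "ipp r (\<phi> m) = 0" "ipp (\<phi> m) r = 0"
    using r ORTH1[of r m] ORTH2[of r m] by (auto simp: ipp_def M_def)
  then show "ipp p (\<phi> m) = coeff p m / \<kappa> m" "ipp (\<phi> m) p = cnj (coeff p m) / \<kappa> m"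
    by (subst p; simp add: ipp_add_left ipp_add_right ipp_smult_left ipp_smult_right ipp_orth kappa_real)+
qed

lemma ZERO: "degree s \<le> k \<Longrightarrow> (\<forall>j\<le>k. ipp s (\<phi> j) = 0) \<Longrightarrow> s = 0"
proof (induction k arbitrary: s)
  case 0
  then have s: "s = smult (coeff s 0 / \<kappa> 0) (\<phi> 0)" by (intro DEC0) simp
  have "ipp s (\<phi> 0) = coeff s 0 / \<kappa> 0" by (subst s) (simp add: ipp_smult_left ipp_orth)
  then have "coeff s 0 = 0" using 0 kappa_nz[of 0] by simp
  then show ?case by (subst s) simp
next
  case (Suc k)
  define c where "c = coeff s (Suc k) / \<kappa> (Suc k)"
  define r where "r = s - smult c (\<phi> (Suc k))"
  have r: "degree r \<le> k" unfolding r_def c_def using Suc by (intro DEC)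
  have s: "s = r + smult c (\<phi> (Suc k))" by (simp add: r_def)
  have "ipp s (\<phi> (Suc k)) = c" using ORTH1[of r "Suc k"] r
    by (subst s) (simp add: ipp_add_left ipp_smult_left ipp_orth)
  then have "c = 0" using Suc.prems by auto
  then have "s = r" using s by simp
  then show ?case using Suc.IH[OF r] Suc.prems by auto
qed

lemma REVSYM: "degree a \<le> m \<Longrightarrow> degree b \<le> m \<Longrightarrow> ipp (rev m a) b = ipp (rev m b) a"
  unfolding ipp_def by (rule M_cong) (simp add: poly_rev_circ)

lemma MULTX: "ipp (pCons 0 p) (pCons 0 q) = ipp p q"
proof -
  have "poly (pCons 0 p) \<zeta> * cnj (poly (pCons 0 q) \<zeta>) = poly p \<zeta> * cnj (poly q \<zeta>)"
    if "\<zeta> \<in> sphere 0 1" for \<zeta>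
    using sphere_cnj[OF that] by (simp add: algebra_simps)
  then show ?thesis unfolding ipp_def by (rule M_cong)
qed

lemma STARIP:
  assumes "degree q \<le> m"
  shows "ipp q (rev m (\<phi> m)) = poly q 0 / \<kappa> m"
proof -
  have "ipp q (rev m (\<phi> m)) = ipp (\<phi> m) (rev m q)"
    unfolding ipp_def
  proof (rule M_cong)
    fix \<zeta> :: complex assume z: "\<zeta> \<in> sphere 0 1"
    show "poly q \<zeta> * cnj (poly (rev m (\<phi> m)) \<zeta>) = poly (\<phi> m) \<zeta> * cnj (poly (rev m q) \<zeta>)"
      using cnj_poly_rev_circ[OF z, of "\<phi> m" m] cnj_poly_rev_circ[OF z assms] by (simp add: deg)
  qed
  also have "\<dots> = cnj (coeff (rev m q) m) / \<kappa> m"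
    by (rule LEAD(2)) (rule degree_rev)
  also have "\<dots> = poly q 0 / \<kappa> m"
    by (simp add: coeff_rev poly_0_coeff_0)
  finally show ?thesis .
qed

lemma phi_nz: "\<phi> k \<noteq> 0" using kappa_nz[of k] by auto

lemma RECUR:
  assumes m: "0 < m"
  shows "smult (\<kappa> m) (\<phi> (Suc m)) = smult (\<kappa> (Suc m)) (pCons 0 (\<phi> m)) + smult (poly (\<phi> (Suc m)) 0) (rev m (\<phi> m))"
proof -
  define a where "a = poly (\<phi> (Suc m)) 0"
  define r where "r = smult (\<kappa> m) (\<phi> (Suc m)) - smult (\<kappa> (Suc m)) (pCons 0 (\<phi> m)) - smult a (rev m (\<phi> m))"
  have dr: "degree (rev m (\<phi> m)) \<le> m" by (rule degree_rev)
  have d1: "degree r \<le> Suc m"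
    unfolding r_def
    apply (intro order.trans[OF degree_diff_le_max] max.boundedI order.trans[OF degree_smult_le])
    using degree_pCons_le[of 0 "\<phi> m"] dr by (auto simp: deg)
  have "coeff (rev m (\<phi> m)) (Suc m) = 0" using dr by (intro coeff_eq_0) simp
  then have "coeff r (Suc m) = 0" unfolding r_def by simp
  with d1 have d2: "degree r \<le> m" by (rule deg_drop)
  have "coeff r 0 = 0" unfolding r_def a_def
    by (simp add: coeff_rev kappa_real poly_0_coeff_0)
  obtain c s where rs: "r = pCons c s" by (cases r)
  with \<open>coeff r 0 = 0\<close> have rs: "r = pCons 0 s" by simp
  have ds: "degree s \<le> m - 1"
  proof (cases "s = 0")
    case False
    then show ?thesis using d2 rs by simp
  qed simp
  have "ipp s (\<phi> j) = 0" if j: "j \<le> m - 1" for j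
  proof -
    have "ipp s (\<phi> j) = ipp r (pCons 0 (\<phi> j))" by (simp add: rs MULTX)
    also have "\<dots> = \<kappa> m * ipp (\<phi> (Suc m)) (pCons 0 (\<phi> j))
         - \<kappa> (Suc m) * ipp (pCons 0 (\<phi> m)) (pCons 0 (\<phi> j))
         - a * ipp (rev m (\<phi> m)) (pCons 0 (\<phi> j))"
      unfolding r_def ipp_diff_left ipp_smult_left by (rule refl)
    finally have e: "ipp s (\<phi> j) = \<kappa> m * ipp (\<phi> (Suc m)) (pCons 0 (\<phi> j))
         - \<kappa> (Suc m) * ipp (pCons 0 (\<phi> m)) (pCons 0 (\<phi> j))
         - a * ipp (rev m (\<phi> m)) (pCons 0 (\<phi> j))" .
    have e1: "ipp (\<phi> (Suc m)) (pCons 0 (\<phi> j)) = 0"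
      using degree_pCons_le[of 0 "\<phi> j"] j m by (intro ORTH2) (simp add: deg)
    have e2: "ipp (pCons 0 (\<phi> m)) (pCons 0 (\<phi> j)) = 0"
      using j m by (simp add: MULTX ipp_orth)
    have e3: "ipp (rev m (\<phi> m)) (pCons 0 (\<phi> j)) = ipp (rev m (pCons 0 (\<phi> j))) (\<phi> m)"
      using degree_pCons_le[of 0 "\<phi> j"] j m by (intro REVSYM) (simp_all add: deg)
    have e4: "ipp (rev m (pCons 0 (\<phi> j))) (\<phi> m) = 0"
    proof (rule ORTH1)
      have sm: "Suc (m - 1) = m" using m by simp
      have "coeff (rev m (pCons 0 (\<phi> j))) m = cnj (coeff (pCons 0 (\<phi> j)) 0)"
        using coeff_rev[of m m "pCons 0 (\<phi> j)"] by simp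
      then have c0: "coeff (rev m (pCons 0 (\<phi> j))) (Suc (m - 1)) = 0"
        unfolding sm by simp
      have "degree (rev m (pCons 0 (\<phi> j))) \<le> Suc (m - 1)"
        unfolding sm by (rule degree_rev)
      from deg_drop[OF this c0] have "degree (rev m (pCons 0 (\<phi> j))) \<le> m - 1" .
      then show "degree (rev m (pCons 0 (\<phi> j))) < m" using m by simp
    qed
    show ?thesis unfolding e e1 e2 e3 e4 by simp
  qed
  then have "s = 0" using ds by (intro ZERO[of s "m - 1"]) auto
  then have "r = 0" using rs by simp
  then show ?thesis unfolding r_def a_def by (simp add: algebra_simps)
qed

lemma FACTS:
  assumes m: "0 < m"
  defines "a \<equiv> poly (\<phi> (Suc m)) 0" and "R \<equiv> rev m (\<phi> m)"
  shows "ipp (pCons 0 (\<phi> m)) R = - a / \<kappa> (Suc m)"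
    and "ipp (\<phi> m) R = poly (\<phi> m) 0 / \<kappa> m"
    and "ipp (pCons 0 (pderiv (\<phi> m))) R = 0"
    and "\<kappa> (Suc m) * \<kappa> (Suc m) - a * cnj a = \<kappa> m * \<kappa> m"
proof -
  have dR: "degree R \<le> m" unfolding R_def by (rule degree_rev)
  have RR: "ipp R R = 1"
    unfolding R_def using degree_rev[of m "\<phi> m"] kappa_nz[of m]
    by (subst STARIP) (simp_all add: poly_0_coeff_0 coeff_rev kappa_real)
  have rec: "smult (\<kappa> m) (\<phi> (Suc m)) = smult (\<kappa> (Suc m)) (pCons 0 (\<phi> m)) + smult a R"
    unfolding a_def R_def by (rule RECUR[OF m])
  have "ipp (smult (\<kappa> m) (\<phi> (Suc m))) R = 0"
    using dR by (simp add: ipp_smult_left ORTH2)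
  then have "\<kappa> (Suc m) * ipp (pCons 0 (\<phi> m)) R + a = 0"
    unfolding rec by (simp add: ipp_add_left ipp_smult_left RR del: smult_pCons)
  then show X: "ipp (pCons 0 (\<phi> m)) R = - a / \<kappa> (Suc m)"
    using kappa_nz[of "Suc m"] by (simp add: field_simps add_eq_0_iff)
  show "ipp (\<phi> m) R = poly (\<phi> m) 0 / \<kappa> m"
    unfolding R_def by (rule STARIP) (simp add: deg)
  have "degree (pCons 0 (pderiv (\<phi> m))) \<le> m"
    using degree_pCons_le[of 0 "pderiv (\<phi> m)"] degree_pderiv[of "\<phi> m"] m by (simp add: deg)
  then show "ipp (pCons 0 (pderiv (\<phi> m))) R = 0"
    unfolding R_def by (subst STARIP) simp_all
  have XX: "ipp (pCons 0 (\<phi> m)) (pCons 0 (\<phi> m)) = 1" by (simp add: MULTX ipp_orth)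
  have RX: "ipp R (pCons 0 (\<phi> m)) = - cnj a / \<kappa> (Suc m)"
    by (subst ipp_swap) (simp add: X kappa_real)
  have "ipp (smult (\<kappa> m) (\<phi> (Suc m))) (smult (\<kappa> m) (\<phi> (Suc m))) = \<kappa> m * \<kappa> m"
    by (simp add: ipp_smult_left ipp_smult_right ipp_orth kappa_real)
  also have "ipp (smult (\<kappa> m) (\<phi> (Suc m))) (smult (\<kappa> m) (\<phi> (Suc m)))
     = \<kappa> (Suc m) * \<kappa> (Suc m) * ipp (pCons 0 (\<phi> m)) (pCons 0 (\<phi> m))
       + \<kappa> (Suc m) * cnj a * ipp (pCons 0 (\<phi> m)) R
       + a * \<kappa> (Suc m) * ipp R (pCons 0 (\<phi> m)) + a * cnj a * ipp R R"
    unfolding rec ipp_add_left ipp_add_right ipp_smult_left ipp_smult_right kappa_real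
    by (simp add: algebra_simps)
  finally show "\<kappa> (Suc m) * \<kappa> (Suc m) - a * cnj a = \<kappa> m * \<kappa> m"
    unfolding XX X RX RR using kappa_nz[of "Suc m"] by (simp add: field_simps)
qed

lemma CM: "contour_integral (circlepath 0 1) (\<lambda>\<zeta>. X \<zeta> * w \<zeta>) = M (\<lambda>\<zeta>. \<i> * \<zeta> * X \<zeta>)"
  unfolding M_def by (rule contour_integral_eq) auto

lemma J1:
  assumes m: "0 < m"
  shows "contour_integral (circlepath 0 1) (\<lambda>\<zeta>. poly (\<phi> m) \<zeta> ^ 2 / \<zeta> ^ m * w \<zeta>)
        = \<i> * (- poly (\<phi> (Suc m)) 0 / \<kappa> (Suc m))"
proof -
  have "M (\<lambda>\<zeta>. \<i> * \<zeta> * (poly (\<phi> m) \<zeta> ^ 2 / \<zeta> ^ m))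
      = M (\<lambda>\<zeta>. \<i> * (poly (pCons 0 (\<phi> m)) \<zeta> * cnj (poly (rev m (\<phi> m)) \<zeta>)))"
  proof (rule M_cong)
    fix \<zeta> :: complex assume z: "\<zeta> \<in> sphere 0 1"
    have "cnj \<zeta> ^ m = 1 / \<zeta> ^ m" using sphere_cnj_pow[OF z, of m] sphere_nz[OF z]
      by (simp add: field_simps)
    then show "\<i> * \<zeta> * (poly (\<phi> m) \<zeta> ^ 2 / \<zeta> ^ m)
      = \<i> * (poly (pCons 0 (\<phi> m)) \<zeta> * cnj (poly (rev m (\<phi> m)) \<zeta>))"
      using cnj_poly_rev_circ[OF z, of "\<phi> m" m] by (simp add: deg power2_eq_square)
  qed
  also have "\<dots> = \<i> * ipp (pCons 0 (\<phi> m)) (rev m (\<phi> m))"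
    unfolding ipp_def by (rule M_cmult) (intro continuous_intros)
  finally show ?thesis unfolding CM FACTS(1)[OF m] .
qed

lemma J2:
  assumes m: "0 < m"
  shows "contour_integral (circlepath 0 1) (\<lambda>\<zeta>. (2 * poly (\<phi> m) \<zeta> * poly (pderiv (\<phi> m)) \<zeta> / \<zeta> ^ m
             - of_nat m * poly (\<phi> m) \<zeta> ^ 2 / \<zeta> ^ Suc m) * w \<zeta>)
        = \<i> * (- of_nat m * poly (\<phi> m) 0 / \<kappa> m)"
proof -
  have "M (\<lambda>\<zeta>. \<i> * \<zeta> * (2 * poly (\<phi> m) \<zeta> * poly (pderiv (\<phi> m)) \<zeta> / \<zeta> ^ m
             - of_nat m * poly (\<phi> m) \<zeta> ^ 2 / \<zeta> ^ Suc m))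
      = M (\<lambda>\<zeta>. \<i> * (2 * (poly (pCons 0 (pderiv (\<phi> m))) \<zeta> * cnj (poly (rev m (\<phi> m)) \<zeta>))
               - of_nat m * (poly (\<phi> m) \<zeta> * cnj (poly (rev m (\<phi> m)) \<zeta>))))"
  proof (rule M_cong)
    fix \<zeta> :: complex assume z: "\<zeta> \<in> sphere 0 1"
    have "cnj \<zeta> ^ m = 1 / \<zeta> ^ m" using sphere_cnj_pow[OF z, of m] sphere_nz[OF z]
      by (simp add: field_simps)
    then show "\<i> * \<zeta> * (2 * poly (\<phi> m) \<zeta> * poly (pderiv (\<phi> m)) \<zeta> / \<zeta> ^ m
             - of_nat m * poly (\<phi> m) \<zeta> ^ 2 / \<zeta> ^ Suc m)
      = \<i> * (2 * (poly (pCons 0 (pderiv (\<phi> m))) \<zeta> * cnj (poly (rev m (\<phi> m)) \<zeta>))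
               - of_nat m * (poly (\<phi> m) \<zeta> * cnj (poly (rev m (\<phi> m)) \<zeta>)))"
      using cnj_poly_rev_circ[OF z, of "\<phi> m" m] sphere_nz[OF z]
      by (simp add: deg power2_eq_square field_simps)
  qed
  also have "\<dots> = \<i> * (2 * ipp (pCons 0 (pderiv (\<phi> m))) (rev m (\<phi> m)) - of_nat m * ipp (\<phi> m) (rev m (\<phi> m)))"
    unfolding ipp_def
    by (subst M_cmult, (intro continuous_intros)+, subst M_diff, (intro continuous_intros)+,
        subst (1 2) M_cmult, (intro continuous_intros)+, rule refl)
  finally show ?thesis unfolding CM FACTS(2,3)[OF m] by simp
qed

end
lemma ALG:
  fixes \<zeta> u U p ps q cq cp cps a ab k k' c cm z :: complex
  assumes "\<zeta> * u = 1" "c * a = k" "k' * q = k * \<zeta> * p + a * ps"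
    "k' * cq = k * u * cp + ab * cps" "cp = U * ps" "cps = U * p"
    "k * k - a * ab = k' * k'"
  shows "k' * k' * (q * (cq - c * (u * U * q)) + p * (cp - cm * cps) + (cm + c * z) * p * cps - c * (z - \<zeta>) * U * p * p) = 0"
  using assms by algebra

lemma CIc: "continuous_on (sphere 0 1) f \<Longrightarrow> f contour_integrable_on circlepath 0 1"
  by (rule contour_integrable_continuous_circlepath) simp

theorem theorem3p1:
  fixes w v :: "complex \<Rightarrow> complex" and S :: "complex set"
    and \<phi> :: "nat \<Rightarrow> complex poly" and n :: nat and z :: complex
  assumes S_open: "open S" and S_circ: "sphere 0 1 \<subseteq> S"
    and v_hol: "v holomorphic_on S"
    and w_exp: "\<And>\<zeta>. \<zeta> \<in> S \<Longrightarrow> w \<zeta> = exp (- v \<zeta>)"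
    and w_pos: "\<And>\<zeta>. \<zeta> \<in> sphere 0 1 \<Longrightarrow> w \<zeta> \<in> \<real> \<and> Re (w \<zeta>) > 0"
    and w_norm: "contour_integral (circlepath 0 1) (\<lambda>\<zeta>. w \<zeta> / (\<i> * \<zeta>)) = 1"
    and moments: "\<And>m::int. (\<lambda>\<zeta>. \<zeta> powi m * w \<zeta> / (\<i> * \<zeta>)) contour_integrable_on circlepath 0 1"
    and kernel_int: "\<And>(m::int) x. x \<in> ball 0 1 \<Longrightarrow> v analytic_on {x} \<Longrightarrow>
        (\<lambda>\<zeta>. (deriv v x - deriv v \<zeta>) / (x - \<zeta>) * \<zeta> powi m * w \<zeta> / (\<i> * \<zeta>))
          contour_integrable_on circlepath 0 1"
    and v_mero: "v meromorphic_on ball 0 1"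
    and phi_deg: "\<And>k. degree (\<phi> k) = k"
    and phi_lead: "\<And>k. lead_coeff (\<phi> k) \<in> \<real> \<and> Re (lead_coeff (\<phi> k)) > 0"
    and phi_orth: "\<And>j k. contour_integral (circlepath 0 1)
        (\<lambda>\<zeta>. poly (\<phi> j) \<zeta> * cnj (poly (\<phi> k) \<zeta>) * w \<zeta> / (\<i> * \<zeta>)) = (if j = k then 1 else 0)"
    and n_ge: "n \<ge> 2"
    and phin0: "poly (\<phi> n) 0 \<noteq> 0" and phin10: "poly (\<phi> (n - 1)) 0 \<noteq> 0"
    and z_in: "z \<in> ball 0 1" and z_nz: "z \<noteq> 0" and z_reg: "v analytic_on {z}"
  shows "B_fun w (deriv v) \<phi> n z + B_fun w (deriv v) \<phi> (n - 1) z
         - kap \<phi> (n - 1) / kap \<phi> (n - 2) * A_fun w (deriv v) \<phi> (n - 1) z / z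
         - kap \<phi> n / kap \<phi> (n - 2) * poly (\<phi> (n - 1)) 0 / poly (\<phi> n) 0 * A_fun w (deriv v) \<phi> (n - 1) z
       = - (of_nat n - 1) / z - deriv v z"
proof -
  have wcS: "continuous_on S w"
  proof (rule continuous_on_eq)
    show "continuous_on S (\<lambda>\<zeta>. exp (- v \<zeta>))"
      using holomorphic_on_imp_continuous_on[OF v_hol] by (intro continuous_intros)
  qed (simp add: w_exp)
  have wcont: "continuous_on (sphere 0 1) w" using continuous_on_subset[OF wcS S_circ] .
  interpret opuc w \<phi>
    by unfold_locales (rule wcont, use w_pos in blast, rule phi_deg, rule phi_lead, rule phi_orth)
  obtain m where n: "n = Suc m" using n_ge by (cases n) auto
  have m: "0 < m" using n_ge n by simp
  obtain k where mk: "m = Suc k" using m by (cases m) auto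
  have nm1: "n - 1 = m" "n - 2 = m - 1" using n by auto
  have dvc: "continuous_on (sphere 0 1) (deriv v)"
    using holomorphic_deriv[OF v_hol S_open] holomorphic_on_imp_continuous_on continuous_on_subset S_circ by blast
  have nz: "norm z < 1" using z_in by simp
  have zs: "z - \<zeta> \<noteq> 0" if "\<zeta> \<in> sphere 0 1" for \<zeta>
  proof
    assume "z - \<zeta> = 0"
    then have "norm z = 1" using that by simp
    with nz show False by simp
  qed
  define a where "a = poly (\<phi> (Suc m)) 0"
  define b where "b = poly (\<phi> m) 0"
  have a0: "a \<noteq> 0" using phin0 n a_def by simp
  have b0: "b \<noteq> 0" using phin10 nm1 b_def by simp
  have kap: "kap \<phi> j = \<kappa> j" for j by (simp add: deg)
  have os: "opuc_star (\<phi> j) = poly (rev j (\<phi> j))" for j by (simp add: opuc_star_rev deg)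
  define f1 where "f1 = (\<lambda>\<zeta>. (deriv v z - deriv v \<zeta>) / (z - \<zeta>) * poly (\<phi> (Suc m)) \<zeta> *
               (cnj (poly (\<phi> (Suc m)) \<zeta>) - kap \<phi> (Suc m) / poly (\<phi> (Suc m)) 0 * cnj (opuc_star (\<phi> (Suc m)) \<zeta>)) * w \<zeta>)"
  define f2 where "f2 = (\<lambda>\<zeta>. (deriv v z - deriv v \<zeta>) / (z - \<zeta>) * poly (\<phi> m) \<zeta> *
               (cnj (poly (\<phi> m) \<zeta>) - kap \<phi> m / poly (\<phi> m) 0 * cnj (opuc_star (\<phi> m) \<zeta>)) * w \<zeta>)"
  define f3 where "f3 = (\<lambda>\<zeta>. (deriv v z - deriv v \<zeta>) / (z - \<zeta>) * poly (\<phi> m) \<zeta> * cnj (opuc_star (\<phi> m) \<zeta>) * w \<zeta>)"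
  have B1: "B_fun w (deriv v) \<phi> (Suc m) z = - \<i> * contour_integral (circlepath 0 1) f1"
    by (simp add: B_fun_def f1_def)
  have B2: "B_fun w (deriv v) \<phi> m z = - \<i> * contour_integral (circlepath 0 1) f2"
    using m by (simp add: B_fun_def f2_def)
  have A3: "A_fun w (deriv v) \<phi> m z = of_nat m * kap \<phi> (m - 1) / kap \<phi> m
        + \<i> * kap \<phi> (m - 1) / b * z * contour_integral (circlepath 0 1) f3"
    using m by (simp add: A_fun_def f3_def b_def)
  have i1: "f1 contour_integrable_on circlepath 0 1"
    unfolding f1_def os by (intro CIc continuous_intros dvc wcont) (use nz in auto)
  have i2: "f2 contour_integrable_on circlepath 0 1"
    unfolding f2_def os by (intro CIc continuous_intros dvc wcont) (use nz in auto)
  have i3: "f3 contour_integrable_on circlepath 0 1"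
    unfolding f3_def os by (intro CIc continuous_intros dvc wcont) (use nz in auto)
  define P where "P = (\<lambda>\<zeta>. poly (\<phi> m) \<zeta> ^ 2 / \<zeta> ^ m)"
  define P' where "P' = (\<lambda>\<zeta>. 2 * poly (\<phi> m) \<zeta> * poly (pderiv (\<phi> m)) \<zeta> / \<zeta> ^ m
             - of_nat m * poly (\<phi> m) \<zeta> ^ 2 / \<zeta> ^ Suc m)"
  define c where "c = \<kappa> (Suc m) / a"
  define cm where "cm = \<kappa> m / b"
  have pw: "f1 \<zeta> + f2 \<zeta> + (cm + c * z) * f3 \<zeta> = c * (deriv v z * (P \<zeta> * w \<zeta>) - deriv v \<zeta> * P \<zeta> * w \<zeta>)"
    if z1: "\<zeta> \<in> sphere 0 1" for \<zeta>
  proof -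
    have z0: "\<zeta> \<noteq> 0" using z1 by auto
    define p where "p = poly (\<phi> m) \<zeta>"
    define ps where "ps = poly (rev m (\<phi> m)) \<zeta>"
    define q where "q = poly (\<phi> (Suc m)) \<zeta>"
    define U where "U = cnj \<zeta> ^ m"
    have h1: "\<zeta> * cnj \<zeta> = 1" by (rule sphere_cnj[OF z1])
    have hc: "c * a = \<kappa> (Suc m)" using a0 by (simp add: c_def)
    have h3: "\<kappa> m * q = \<kappa> (Suc m) * \<zeta> * p + a * ps"
    proof -
      have "poly (smult (\<kappa> m) (\<phi> (Suc m))) \<zeta> = poly (smult (\<kappa> (Suc m)) (pCons 0 (\<phi> m)) + smult (poly (\<phi> (Suc m)) 0) (rev m (\<phi> m))) \<zeta>"
        by (subst RECUR[OF m]) (rule refl)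
      then show ?thesis by (simp add: p_def q_def ps_def a_def algebra_simps)
    qed
    have h4: "\<kappa> m * cnj q = \<kappa> (Suc m) * cnj \<zeta> * cnj p + cnj a * cnj ps"
      using arg_cong[OF h3, of cnj] by (simp add: kappa_real)
    have "U * ps = (\<zeta>^m * cnj \<zeta>^m) * cnj p"
      using poly_rev_circ[OF z1, of "\<phi> m" m] by (simp add: U_def ps_def deg p_def mult_ac)
    then have h5: "cnj p = U * ps" by (simp add: sphere_cnj_pow[OF z1])
    have h6: "cnj ps = U * p"
      using cnj_poly_rev_circ[OF z1, of "\<phi> m" m] by (simp add: deg ps_def U_def p_def)
    have h7: "\<kappa> (Suc m) * \<kappa> (Suc m) - a * cnj a = \<kappa> m * \<kappa> m"
      using FACTS(4)[OF m] by (simp add: a_def)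
    have G0: "\<kappa> m * \<kappa> m * (q * (cnj q - c * (cnj \<zeta> * U * q)) + p * (cnj p - cm * cnj ps)
        + (cm + c * z) * p * cnj ps - c * (z - \<zeta>) * U * p * p) = 0"
      by (rule ALG[OF h1 hc h3 h4 h5 h6 h7])
    have G: "q * (cnj q - c * (cnj \<zeta> * U * q)) + p * (cnj p - cm * cnj ps) + (cm + c * z) * p * cnj ps
        = c * (z - \<zeta>) * U * p * p"
      using G0 kappa_nz[of m] by simp
    have st1: "cnj (opuc_star (\<phi> (Suc m)) \<zeta>) = cnj \<zeta> * U * q"
      using cnj_poly_rev_circ[OF z1, of "\<phi> (Suc m)" "Suc m"] by (simp add: os deg U_def q_def)
    have st2: "cnj (opuc_star (\<phi> m) \<zeta>) = cnj ps" by (simp add: os ps_def)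
    have kk: "kap \<phi> (Suc m) / poly (\<phi> (Suc m)) 0 = c" "kap \<phi> m / poly (\<phi> m) 0 = cm"
      by (simp_all add: kap c_def cm_def a_def b_def)
    have U': "U = 1 / \<zeta>^m" using sphere_cnj_pow[OF z1, of m] z0 by (simp add: U_def field_simps)
    define K where "K = (deriv v z - deriv v \<zeta>) / (z - \<zeta>)"
    have Kz: "K * (z - \<zeta>) = deriv v z - deriv v \<zeta>" using zs[OF z1] by (simp add: K_def)
    have UP: "U * p * p = P \<zeta>" by (simp add: U' P_def p_def power2_eq_square)
    have "f1 \<zeta> + f2 \<zeta> + (cm + c * z) * f3 \<zeta> = K *
       (q * (cnj q - c * (cnj \<zeta> * U * q)) + p * (cnj p - cm * cnj ps) + (cm + c * z) * p * cnj ps) * w \<zeta>"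
      unfolding f1_def f2_def f3_def st1 st2 kk K_def[symmetric] p_def[symmetric] q_def[symmetric]
      by (simp add: algebra_simps)
    also have "\<dots> = K * (z - \<zeta>) * (c * (U * p * p)) * w \<zeta>"
      unfolding G by (simp add: algebra_simps)
    also have "\<dots> = c * (deriv v z * (P \<zeta> * w \<zeta>) - deriv v \<zeta> * P \<zeta> * w \<zeta>)"
      unfolding Kz UP by (simp add: algebra_simps)
    finally show ?thesis .
  qed
  have Pc: "continuous_on (sphere 0 1) P"
    unfolding P_def by (intro continuous_intros) auto
  have iP: "(\<lambda>\<zeta>. P \<zeta> * w \<zeta>) contour_integrable_on circlepath 0 1"
    by (intro CIc continuous_intros Pc wcont)
  have iPd: "(\<lambda>\<zeta>. deriv v \<zeta> * P \<zeta> * w \<zeta>) contour_integrable_on circlepath 0 1"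
    by (intro CIc continuous_intros Pc wcont dvc)
  have iP': "(\<lambda>\<zeta>. P' \<zeta> * w \<zeta>) contour_integrable_on circlepath 0 1"
    unfolding P'_def by (intro CIc continuous_intros wcont) auto
  have sum: "contour_integral (circlepath 0 1) f1 + contour_integral (circlepath 0 1) f2
      + (cm + c * z) * contour_integral (circlepath 0 1) f3
      = c * (deriv v z * contour_integral (circlepath 0 1) (\<lambda>\<zeta>. P \<zeta> * w \<zeta>)
             - contour_integral (circlepath 0 1) (\<lambda>\<zeta>. deriv v \<zeta> * P \<zeta> * w \<zeta>))"
  proof -
    have "contour_integral (circlepath 0 1) f1 + contour_integral (circlepath 0 1) f2
      + (cm + c * z) * contour_integral (circlepath 0 1) f3
      = contour_integral (circlepath 0 1) (\<lambda>\<zeta>. f1 \<zeta> + f2 \<zeta> + (cm + c * z) * f3 \<zeta>)"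
      by (simp add: contour_integral_add contour_integral_lmul contour_integrable_add
          contour_integrable_lmul i1 i2 i3)
    also have "\<dots> = contour_integral (circlepath 0 1) (\<lambda>\<zeta>. c * (deriv v z * (P \<zeta> * w \<zeta>) - deriv v \<zeta> * P \<zeta> * w \<zeta>))"
      by (rule contour_integral_eq) (simp add: pw)
    also have "\<dots> = c * (deriv v z * contour_integral (circlepath 0 1) (\<lambda>\<zeta>. P \<zeta> * w \<zeta>)
             - contour_integral (circlepath 0 1) (\<lambda>\<zeta>. deriv v \<zeta> * P \<zeta> * w \<zeta>))"
      by (simp add: contour_integral_diff contour_integral_lmul contour_integrable_diff
          contour_integrable_lmul iP iPd)
    finally show ?thesis .
  qed
  have wd: "(w has_field_derivative (- deriv v \<zeta> * w \<zeta>)) (at \<zeta>)" if "\<zeta> \<in> S" for \<zeta>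
  proof -
    have "((\<lambda>\<zeta>. exp (- v \<zeta>)) has_field_derivative exp (- v \<zeta>) * (- deriv v \<zeta>)) (at \<zeta>)"
      using holomorphic_derivI[OF v_hol S_open that, of UNIV] by (auto intro!: derivative_eq_intros)
    then have "(w has_field_derivative exp (- v \<zeta>) * (- deriv v \<zeta>)) (at \<zeta>)"
      by (rule has_field_derivative_transform_within_open[OF _ S_open that]) (simp add: w_exp)
    then show ?thesis using w_exp[OF that] by (simp add: mult.commute)
  qed
  have Fd: "((\<lambda>\<zeta>. P \<zeta> * w \<zeta>) has_field_derivative (P' \<zeta> * w \<zeta> - deriv v \<zeta> * P \<zeta> * w \<zeta>)) (at \<zeta> within (S - {0}))"
    if "\<zeta> \<in> S - {0}" for \<zeta>
  proof -
    have z0: "\<zeta> \<noteq> 0" using that by simp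
    have d1: "(poly (\<phi> m) has_field_derivative poly (pderiv (\<phi> m)) \<zeta>) (at \<zeta>)" by (rule poly_DERIV)
    have dP: "(P has_field_derivative P' \<zeta>) (at \<zeta>)"
      unfolding P_def P'_def mk
      by (rule derivative_eq_intros d1 refl | simp add: z0)+ (simp add: z0 field_simps power2_eq_square)
    have zS: "\<zeta> \<in> S" using that by simp
    from DERIV_mult[OF dP wd[OF zS]]
    have "((\<lambda>\<zeta>. P \<zeta> * w \<zeta>) has_field_derivative (P' \<zeta> * w \<zeta> - deriv v \<zeta> * P \<zeta> * w \<zeta>)) (at \<zeta>)"
      by (rule DERIV_cong) (simp add: algebra_simps)
    then show ?thesis by (rule has_field_derivative_at_within)
  qed
  have "((\<lambda>\<zeta>. P' \<zeta> * w \<zeta> - deriv v \<zeta> * P \<zeta> * w \<zeta>) has_contour_integral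
         (\<lambda>\<zeta>. P \<zeta> * w \<zeta>) (pathfinish (circlepath 0 1)) - (\<lambda>\<zeta>. P \<zeta> * w \<zeta>) (pathstart (circlepath 0 1))) (circlepath 0 1)"
    by (rule contour_integral_primitive[OF Fd]) (use S_circ in auto)
  then have "contour_integral (circlepath 0 1) (\<lambda>\<zeta>. P' \<zeta> * w \<zeta> - deriv v \<zeta> * P \<zeta> * w \<zeta>) = 0"
    by (intro contour_integral_unique) simp
  then have parts: "contour_integral (circlepath 0 1) (\<lambda>\<zeta>. deriv v \<zeta> * P \<zeta> * w \<zeta>)
       = contour_integral (circlepath 0 1) (\<lambda>\<zeta>. P' \<zeta> * w \<zeta>)"
    by (simp add: contour_integral_diff iP' iPd)
  have J1': "contour_integral (circlepath 0 1) (\<lambda>\<zeta>. P \<zeta> * w \<zeta>) = \<i> * (- a / \<kappa> (Suc m))"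
    using J1[OF m] by (simp add: P_def a_def)
  have J2': "contour_integral (circlepath 0 1) (\<lambda>\<zeta>. P' \<zeta> * w \<zeta>) = \<i> * (- of_nat m * b / \<kappa> m)"
    using J2[OF m] by (simp add: P'_def b_def)
  have I1: "contour_integral (circlepath 0 1) f1 = c * (deriv v z * (\<i> * (- a / \<kappa> (Suc m))) - \<i> * (- of_nat m * b / \<kappa> m))
      - contour_integral (circlepath 0 1) f2 - (cm + c * z) * contour_integral (circlepath 0 1) f3"
    using sum unfolding parts J1' J2' by (simp add: algebra_simps)
  have k0: "\<kappa> (m - 1) \<noteq> 0" "\<kappa> m \<noteq> 0" "\<kappa> (Suc m) \<noteq> 0" by (simp_all add: kappa_nz)
  show ?thesis
    unfolding nm1 unfolding n B1 B2 A3 I1 kap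
    using k0 a0 b0 z_nz
    by (simp add: c_def cm_def a_def b_def field_simps)
qed

end
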